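(* Let $F_0$ and $F_s$ be distribution functions, with $U_r(t):=F_r^{\leftarrow}(1-1/t)$ for $t>1$, $r\in\{0,s\}$, and let $\gamma\in\mathbb{R}$, $\rho\le0$, $c\in\mathbb{R}$, $s\in\mathbb{R}$. Let $a_0$ be a positive function and $\alpha_0$ a function, eventually of constant sign, with $\lim_{t\to\infty}\alpha_0(t)=0$, such that for each $x>0$ $$\lim_{t\to\infty}\frac{\frac{U_0(tx)-U_0(t)}{a_0(t)}-\frac{x^\gamma-1}{\gamma}}{\alpha_0(t)}=H_{\gamma,\rho}(x)$$ and $$\lim_{t\to\infty}\frac{\frac{U_s(t)-U_0(t)}{a_0(t)}-\frac{e^{c\gamma s}-1}{\gamma}}{\alpha_0(t)}=H_{\gamma,\rho}(e^{cs}).$$ Define $\alpha_s(t):=e^{cs\rho}\alpha_0(t)$ and $a_s(t):=e^{cs\gamma}a_0(t)\bigl(1+\alpha_0(t)\frac{e^{cs\rho}-1}{\rho}\bigr)$. Then for every $x>0$ $$\lim_{t\to\infty}\frac{\frac{U_s(tx)-U_s(t)}{a_s(t)}-\frac{x^\gamma-1}{\gamma}}{\alpha_s(t)}=H_{\gamma,\rho}(x).$$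
   Context: $F^{\leftarrow}$ denotes the generalized inverse. $H_{\gamma,\rho}(x):=\frac1\rho\Bigl(\frac{x^{\gamma+\rho}-1}{\gamma+\rho}-\frac{x^\gamma-1}{\gamma}\Bigr)$ for $x>0$, defined by continuity when $\gamma=0$, $\rho=0$ or $\gamma+\rho=0$. Likewise $\frac{x^\gamma-1}{\gamma}:=\log x$ and $\frac{e^{c\gamma s}-1}{\gamma}:=cs$ when $\gamma=0$, and $\frac{e^{cs\rho}-1}{\rho}:=cs$ when $\rho=0$. *)

theory Defs
  imports "HOL-Analysis.Analysis"
begin

definition distr_fun :: "(real \<Rightarrow> real) \<Rightarrow> bool" where
  "distr_fun F \<longleftrightarrow> mono F \<and> (\<forall>x. continuous (at_right x) F)
     \<and> (F \<longlongrightarrow> 0) at_bot \<and> (F \<longlongrightarrow> 1) at_top"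

definition gen_inv :: "(real \<Rightarrow> real) \<Rightarrow> real \<Rightarrow> real" where
  "gen_inv F p = Inf {x. p \<le> F x}"

definition tailq :: "(real \<Rightarrow> real) \<Rightarrow> real \<Rightarrow> real" where
  "tailq F t = gen_inv F (1 - 1 / t)"

definition qpow :: "real \<Rightarrow> real \<Rightarrow> real" where
  "qpow g x = (if g = 0 then ln x else (x powr g - 1) / g)"

text \<open>H_{g,r}(x) = (1/r)(qpow (g+r) x - qpow g x), extended by continuity at r = 0
  (derivative of qpow in the exponent).\<close>
definition Hfun :: "real \<Rightarrow> real \<Rightarrow> real \<Rightarrow> real" where
  "Hfun g r x = (if r \<noteq> 0 then (qpow (g + r) x - qpow g x) / r
     else if g = 0 then (ln x)\<^sup>2 / 2
     else (x powr g * ln x) / g - (x powr g - 1) / g\<^sup>2)"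

end

theory Submission
  imports Defs
begin

lemma qpow_mult: "x > 0 \<Longrightarrow> y > 0 \<Longrightarrow> qpow g (x*y) = qpow g y + y powr g * qpow g x"
  by (auto simp: qpow_def ln_mult powr_mult field_simps)

lemma Hfun_mult: assumes "x > 0" "y > 0"
  shows "Hfun g r (x*y) = Hfun g r y + y powr g * qpow r y * qpow g x + y powr (g+r) * Hfun g r x"
proof (cases "r = 0")
  case False
  then show ?thesis using assms
  proof -
    have q: "qpow r y = (y powr r - 1)/r" using False by (simp add: qpow_def)
    show ?thesis using False assms
      unfolding Hfun_def by (simp add: qpow_mult q powr_add field_simps)
  qed
next
  case True
  then show ?thesis using assms
    by (cases "g = 0") (auto simp: Hfun_def qpow_def ln_mult powr_mult field_simps power2_eq_square)
qed

lemma qpow_e_pos: "qpow g (exp 1) > 0"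
proof (cases "g = 0")
  case False
  have "exp 1 powr g = exp g" by (simp add: powr_def)
  then show ?thesis using False
    by (cases "g > 0") (auto simp: qpow_def divide_pos_pos divide_neg_neg)
qed (simp add: qpow_def)

lemma det_ne: "Hfun g r (exp 1) * qpow g (exp (-1)) - Hfun g r (exp (-1)) * qpow g (exp 1) \<noteq> 0"
proof -
  define E where "E = exp 1 powr g"
  define F where "F = exp 1 powr r"
  define q1 where "q1 = qpow g (exp 1)"
  define H1 where "H1 = Hfun g r (exp 1)"
  define Q where "Q = qpow r (exp 1)"
  have E: "E > 0" "F > 0" by (auto simp: E_def F_def)
  have q1: "q1 > 0" using qpow_e_pos q1_def by auto
  have Q: "Q > 0" using qpow_e_pos Q_def by auto
  have one: "exp (-1) * exp 1 = (1::real)" by (simp add: exp_minus)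
  have a: "0 = q1 + E * qpow g (exp (-1))"
  proof -
    have "qpow g (exp (-1) * exp 1) = 0" unfolding one by (simp add: qpow_def)
    then show ?thesis using qpow_mult[of "exp (-1)" "exp 1" g] by (simp add: q1_def E_def)
  qed
  have b: "0 = H1 + E * Q * qpow g (exp (-1)) + E * F * Hfun g r (exp (-1))"
  proof -
    have "Hfun g r (exp (-1) * exp 1) = 0" unfolding one by (simp add: Hfun_def qpow_def)
    then show ?thesis using Hfun_mult[of "exp (-1)" "exp 1" g r]
      by (simp add: H1_def E_def F_def Q_def powr_add)
  qed
  have q2: "qpow g (exp (-1)) = - q1 / E" using a E by (simp add: field_simps)
  have H2: "Hfun g r (exp (-1)) = - (H1 - Q * q1) / (E * F)" using b E q2 by (simp add: field_simps)
  have pos: "Q * q1 + (F - 1) * H1 > 0"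
  proof (cases "r = 0")
    case True
    then show ?thesis using q1 by (simp add: Q_def F_def qpow_def)
  next
    case False
    have "Q * q1 + (F - 1) * H1 = Q * qpow (g + r) (exp 1)"
      using False by (simp add: Q_def F_def H1_def q1_def Hfun_def qpow_def field_simps)
    then show ?thesis using Q qpow_e_pos by simp
  qed
  have "Hfun g r (exp 1) * qpow g (exp (-1)) - Hfun g r (exp (-1)) * qpow g (exp 1)
        = - q1 / (E * F) * (Q * q1 + (F - 1) * H1)"
    unfolding q2 H2 using E by (simp add: H1_def[symmetric] q1_def[symmetric] field_simps)
  then show ?thesis using pos q1 E by simp
qed


lemma alg1:
  fixes A0 A1 B0 B1 P Px Pxy qx qy qxy X Hx Hy Hxy :: real
  assumes "A0 \<noteq> 0" "A1 \<noteq> 0" "B0 \<noteq> 0" "B1 \<noteq> 0" "qxy = qx + X*qy"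
  shows "(A1*B1/(A0*B0))*(Hy + (((Pxy - Px)/A1 - qy)/B1 - Hy)) - ((X - A1/A0)/B0)*qy
       = Hxy - Hx + (((Pxy - P)/A0 - qxy)/B0 - Hxy) - (((Px - P)/A0 - qx)/B0 - Hx)"
  using assms by (simp add: field_simps)

lemma alg2:
  fixes A0 A1 B0 B1 S0 S1 P Pe Pxe qx qe qxe G Q R Hxe He :: real
  assumes "A0 \<noteq> 0" "A1 \<noteq> 0" "B0 \<noteq> 0" "B1 \<noteq> 0" "G \<noteq> 0" "R \<noteq> 0" "1 + B0*Q \<noteq> 0"
    "qxe = qe + G*qx"
  shows "((S1 - S0)/(G*A0*(1+B0*Q)) - qx)/(R*B0)
    = ((Hxe - He + ((A1*B1/(A0*B0)) * (((S1 - Pxe)/A1)/B1) - ((S0 - Pe)/A0)/B0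
         + (((Pxe - P)/A0 - qxe)/B0 - Hxe) - (((Pe - P)/A0 - qe)/B0 - He)))/G - Q*qx)/(R*(1+B0*Q))"
proof -
  have k: "Hxe - He + ((A1*B1/(A0*B0)) * (((S1 - Pxe)/A1)/B1) - ((S0 - Pe)/A0)/B0
         + (((Pxe - P)/A0 - qxe)/B0 - Hxe) - (((Pe - P)/A0 - qe)/B0 - He))
       = (S1 - S0)/(A0*B0) - G*qx/B0"
    using assms by (simp add: field_simps)
  define K where "K = 1 + B0*Q"
  have K: "K \<noteq> 0" using assms K_def by simp
  have "((S1 - S0)/(A0*B0) - G*qx/B0)/G - Q*qx = ((S1 - S0)/(G*A0) - qx*K)/B0"
    using assms by (simp add: K_def field_simps)
  moreover have "((S1 - S0)/(G*A0) - qx*K)/B0/(R*K) = ((S1 - S0)/(G*A0*K) - qx)/(R*B0)"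
    using K assms by (simp add: field_simps)
  ultimately show ?thesis unfolding k K_def[symmetric] by simp
qed

lemma cramer:
  fixes vv uu hA hB qA qB rA rB :: real
  assumes "vv * hA - uu * qA = rA" "vv * hB - uu * qB = rB" "hA * qB - hB * qA \<noteq> 0"
  shows "vv = (rA * qB - rB * qA) / (hA * qB - hB * qA)"
proof -
  have "vv * (hA * qB - hB * qA) = (vv * hA - uu * qA) * qB - (vv * hB - uu * qB) * qA"
    by (simp add: algebra_simps)
  then have "vv * (hA * qB - hB * qA) = rA * qB - rB * qA"
    using assms(1,2) by simp
  then show ?thesis using assms(3) by (simp add: field_simps)
qed

theorem lemma1:
  fixes F0 Fs a0 \<alpha>0 :: "real \<Rightarrow> real" and \<gamma> \<rho> c s :: real
  assumes "distr_fun F0" and "distr_fun Fs"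
    and "\<rho> \<le> 0"
    and "\<forall>t. a0 t > 0"
    and "(\<forall>\<^sub>F t in at_top. \<alpha>0 t > 0) \<or> (\<forall>\<^sub>F t in at_top. \<alpha>0 t < 0)"
    and "(\<alpha>0 \<longlongrightarrow> 0) at_top"
    and "\<And>x. x > 0 \<Longrightarrow>
      ((\<lambda>t. ((tailq F0 (t * x) - tailq F0 t) / a0 t - qpow \<gamma> x) / \<alpha>0 t)
        \<longlongrightarrow> Hfun \<gamma> \<rho> x) at_top"
    and "((\<lambda>t. ((tailq Fs t - tailq F0 t) / a0 t - qpow \<gamma> (exp (c * s))) / \<alpha>0 t)
        \<longlongrightarrow> Hfun \<gamma> \<rho> (exp (c * s))) at_top"
  shows "\<forall>x>0. ((\<lambda>t.
      ((tailq Fs (t * x) - tailq Fs t)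
          / (exp (c * s * \<gamma>) * a0 t * (1 + \<alpha>0 t * qpow \<rho> (exp (c * s))))
        - qpow \<gamma> x) / (exp (c * s * \<rho>) * \<alpha>0 t))
      \<longlongrightarrow> Hfun \<gamma> \<rho> x) at_top"
proof (intro allI impI)
  fix x :: real assume x: "x > 0"
  define q where "q = qpow \<gamma>"
  define H where "H = Hfun \<gamma> \<rho>"
  define e where "e = exp (c * s)"
  define Q where "Q = qpow \<rho> e"
  have e: "e > 0" by (simp add: e_def)
  define \<epsilon> where "\<epsilon> y t = ((tailq F0 (t * y) - tailq F0 t) / a0 t - q y) / \<alpha>0 t - H y" for y t
  have eps: "(\<epsilon> y \<longlongrightarrow> 0) at_top" if "y > 0" for y
  proof -
    have "((\<lambda>t. ((tailq F0 (t * y) - tailq F0 t) / a0 t - q y) / \<alpha>0 t - H y) \<longlongrightarrow> H y - H y) at_top"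
      by (rule tendsto_diff[OF _ tendsto_const]) (use assms(7)[OF that] in \<open>simp add: q_def H_def\<close>)
    then show ?thesis by (simp add: \<epsilon>_def[abs_def])
  qed
  have tx: "filterlim (\<lambda>t. t * x) at_top at_top"
    by (rule filterlim_at_top_mult_tendsto_pos[OF tendsto_const x filterlim_ident])
  have epsx: "((\<lambda>t. \<epsilon> y (t * x)) \<longlongrightarrow> 0) at_top" if "y > 0" for y
    using filterlim_compose[OF eps[OF that] tx] .
  have nz: "\<forall>\<^sub>F t in at_top. \<alpha>0 t \<noteq> 0"
    using assms(5) by (auto elim: eventually_mono)
  have nzx: "\<forall>\<^sub>F t in at_top. \<alpha>0 (t * x) \<noteq> 0"
    using nz tx by (auto simp: filterlim_iff)
  have a0: "a0 t \<noteq> 0" for t using assms(4) by (metis less_irrefl)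
  define v where "v t = a0 (t*x) * \<alpha>0 (t*x) / (a0 t * \<alpha>0 t)" for t
  define u where "u t = (x powr \<gamma> - a0 (t*x) / a0 t) / \<alpha>0 t" for t
  have eqn: "\<forall>\<^sub>F t in at_top. v t * (H y + \<epsilon> y (t*x)) - u t * q y = H (x*y) - H x + \<epsilon> (x*y) t - \<epsilon> x t"
    if y: "y > 0" for y
    using nz nzx
  proof eventually_elim
    case (elim t)
    have as: "tailq F0 (t * (x * y)) = tailq F0 (t * x * y)" by (simp add: mult.assoc)
    have qq: "q (x*y) = q x + x powr \<gamma> * q y"
      using qpow_mult[OF y x, of \<gamma>] by (simp add: q_def mult.commute)
    show ?case unfolding v_def u_def \<epsilon>_def as
      by (rule alg1[OF a0 a0 elim(1) elim(2) qq])
  qed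
  define y1 where "y1 = exp (1::real)"
  define y2 where "y2 = exp (-1::real)"
  have y12: "y1 > 0" "y2 > 0" by (auto simp: y1_def y2_def)
  define d where "d = H y1 * q y2 - H y2 * q y1"
  have d: "d \<noteq> 0" using det_ne by (simp add: d_def H_def q_def y1_def y2_def)
  define D where "D t = (H y1 + \<epsilon> y1 (t*x)) * q y2 - (H y2 + \<epsilon> y2 (t*x)) * q y1" for t
  define N where "N t = (H (x*y1) - H x + \<epsilon> (x*y1) t - \<epsilon> x t) * q y2
                      - (H (x*y2) - H x + \<epsilon> (x*y2) t - \<epsilon> x t) * q y1" for t
  have DL: "(D \<longlongrightarrow> d) at_top"
  proof -
    have "(D \<longlongrightarrow> (H y1 + 0) * q y2 - (H y2 + 0) * q y1) at_top"
      unfolding D_def[abs_def]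
      by (intro tendsto_intros epsx y12)
    then show ?thesis by (simp add: d_def)
  qed
  have NL: "(N \<longlongrightarrow> (H (x*y1) - H x + 0 - 0) * q y2 - (H (x*y2) - H x + 0 - 0) * q y1) at_top"
    unfolding N_def[abs_def] using x y12
    by (intro tendsto_intros eps) auto
  have Dnz: "\<forall>\<^sub>F t in at_top. D t \<noteq> 0"
    using tendsto_imp_eventually_ne[OF DL d] .
  have vN: "\<forall>\<^sub>F t in at_top. v t = N t / D t"
    using eqn[OF y12(1)] eqn[OF y12(2)] Dnz
  proof eventually_elim
    case (elim t)
    show ?case unfolding N_def D_def
      by (rule cramer[OF elim(1) elim(2)]) (use elim(3) in \<open>simp add: D_def\<close>)
  qed
  obtain L where vL: "(v \<longlongrightarrow> L) at_top"
    using tendsto_cong[OF vN] tendsto_divide[OF NL DL d] by blast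
  define W where "W t = ((tailq Fs t - tailq F0 (t * e)) / a0 t) / \<alpha>0 t" for t
  define \<epsilon>s where "\<epsilon>s t = ((tailq Fs t - tailq F0 t) / a0 t - q e) / \<alpha>0 t - H e" for t
  have es: "(\<epsilon>s \<longlongrightarrow> 0) at_top"
  proof -
    have "(\<epsilon>s \<longlongrightarrow> H e - H e) at_top"
      unfolding \<epsilon>s_def[abs_def]
      by (rule tendsto_diff[OF _ tendsto_const]) (use assms(8) in \<open>simp add: q_def H_def e_def\<close>)
    then show ?thesis by simp
  qed
  have WL: "(W \<longlongrightarrow> 0) at_top"
  proof -
    have "\<forall>\<^sub>F t in at_top. \<epsilon>s t - \<epsilon> e t = W t"
      using nz
    proof eventually_elim
      case (elim t)
      then show ?case using a0[of t] by (simp add: \<epsilon>s_def \<epsilon>_def W_def field_simps)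
    qed
    moreover have "((\<lambda>t. \<epsilon>s t - \<epsilon> e t) \<longlongrightarrow> 0 - 0) at_top"
      by (intro tendsto_intros es eps e)
    ultimately show ?thesis by (simp add: tendsto_cong)
  qed
  have WxL: "((\<lambda>t. W (t*x)) \<longlongrightarrow> 0) at_top"
    using filterlim_compose[OF WL tx] .
  define Z where "Z t = v t * W (t*x) - W t + \<epsilon> (x*e) t - \<epsilon> e t" for t
  have ZL: "(Z \<longlongrightarrow> L * 0 - 0 + 0 - 0) at_top"
    unfolding Z_def[abs_def] using x e
    by (intro tendsto_intros vL WxL WL eps) auto
  define G where "G = exp (c * s * \<gamma>)"
  define R where "R = exp (c * s * \<rho>)"
  have Ge: "e powr \<gamma> = G" by (simp add: e_def G_def powr_def mult.commute)
  have Re: "e powr (\<gamma> + \<rho>) = G * R"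
    by (simp add: e_def G_def R_def powr_def exp_add[symmetric] algebra_simps)
  have nzQ: "\<forall>\<^sub>F t in at_top. 1 + \<alpha>0 t * Q \<noteq> 0"
  proof -
    have "((\<lambda>t. 1 + \<alpha>0 t * Q) \<longlongrightarrow> 1 + 0 * Q) at_top"
      by (intro tendsto_intros assms(6))
    then have "((\<lambda>t. 1 + \<alpha>0 t * Q) \<longlongrightarrow> 1) at_top" by simp
    from tendsto_imp_eventually_ne[OF this, of 0] show ?thesis by simp
  qed
  have main: "\<forall>\<^sub>F t in at_top. ((H (x*e) - H e + Z t)/G - Q*q x)/(R*(1+\<alpha>0 t*Q)) =
      ((tailq Fs (t * x) - tailq Fs t)
          / (exp (c * s * \<gamma>) * a0 t * (1 + \<alpha>0 t * qpow \<rho> (exp (c * s))))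
        - qpow \<gamma> x) / (exp (c * s * \<rho>) * \<alpha>0 t)"
    using nz nzx nzQ
  proof eventually_elim
    case (elim t)
    have as: "tailq F0 (t * (x * e)) = tailq F0 (t * x * e)" by (simp add: mult.assoc)
    have qq: "q (x*e) = q e + G * q x"
      using qpow_mult[OF x e, of \<gamma>] Ge by (simp add: q_def)
    have GR: "G \<noteq> 0" "R \<noteq> 0" by (auto simp: G_def R_def)
    show ?case unfolding Z_def v_def W_def \<epsilon>_def as G_def[symmetric] R_def[symmetric]
      e_def[symmetric] Q_def[symmetric] q_def[symmetric]
      by (rule alg2[OF a0 a0 elim(1) elim(2) GR elim(3) qq, symmetric])
  qed
  have lim: "((\<lambda>t. ((H (x*e) - H e + Z t)/G - Q*q x)/(R*(1+\<alpha>0 t*Q)))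
      \<longlongrightarrow> ((H (x*e) - H e + (L * 0 - 0 + 0 - 0))/G - Q*q x)/(R*(1+0*Q))) at_top"
    by (intro tendsto_intros ZL assms(6)) (auto simp: R_def G_def)
  have val: "((H (x*e) - H e + (L * 0 - 0 + 0 - 0))/G - Q*q x)/(R*(1+0*Q)) = H x"
  proof -
    have "H (x*e) = H e + G * Q * q x + G * R * H x"
      using Hfun_mult[OF x e, of \<gamma> \<rho>] Ge Re by (simp add: H_def Q_def q_def)
    moreover have "G \<noteq> 0" "R \<noteq> 0" by (auto simp: G_def R_def)
    ultimately show ?thesis by (simp add: field_simps)
  qed
  show "((\<lambda>t.
      ((tailq Fs (t * x) - tailq Fs t)
          / (exp (c * s * \<gamma>) * a0 t * (1 + \<alpha>0 t * qpow \<rho> (exp (c * s))))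
        - qpow \<gamma> x) / (exp (c * s * \<rho>) * \<alpha>0 t))
      \<longlongrightarrow> Hfun \<gamma> \<rho> x) at_top"
    using tendsto_cong[OF main] lim val by (simp add: H_def)
qed

end
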